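(* Let $\varphi(x)=a_nx^n+\cdots+a_1x+a_0\in\mathbb{C}[x]$ with $a_n\neq0$ have $n$ distinct roots $x_1,\dots,x_n$. Define numbers $b_{j,k}$ ($j=-1,0,\dots,n-1$, $k=0,\dots,n-1$) by $b_{-1,k}=0$, $$b_{n-i,0}=(n-(i-1))\,a_{n-(i-1)},\qquad i=1,\dots,n,$$ $$b_{n-i,k}=-\frac{a_{n-i}}{a_n}\,b_{n-1,k-1}+b_{n-(i+1),k-1},\qquad i=1,\dots,n,\ k=1,\dots,n-1.$$ Then the Newton sums $N_k=\sum_{i=1}^n x_i^k$ satisfy $$N_k=\frac{b_{n-1,k}}{a_n},\qquad k=0,1,\dots,n-1.$$
   Context: Equivalently, $b_{n-1,k}x^{n-1}+\cdots+b_{1,k}x+b_{0,k}$ is the unique polynomial of degree less than $n$ in the coset of $\varphi'(x)x^k$ in $R/(\varphi(x))$, where $R\subset\mathbb{C}(x)$ is the subring of rational functions $p/q$ ($p,q\in\mathbb{C}[x]$) with $q(x_i)\neq0$ at every root $x_i$ of $\varphi$, and $(\varphi(x))$ is the ideal of $R$ generated by $\varphi$. *)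

theory Defs
  imports "HOL-Computational_Algebra.Polynomial"
begin

text \<open>The numbers b_{j,k} of the paper, for p = a_n x^n + ... + a_0 with n = degree p.
  Indices j range over -1,0,...,n-1 (an int), k over nat.  b_{-1,k} = 0;
  for 0 <= j <= n-1 (i.e. j = n-i, i=1..n):
  b_{j,0} = (j+1) a_{j+1},  b_{j,k+1} = -(a_j/a_n) b_{n-1,k} + b_{j-1,k}.\<close>

fun bnum :: "complex poly \<Rightarrow> int \<Rightarrow> nat \<Rightarrow> complex" where
  "bnum p j 0 =
     (if 0 \<le> j \<and> j < int (degree p)
      then of_nat (nat j + 1) * coeff p (nat j + 1) else 0)"
| "bnum p j (Suc k) =
     (if 0 \<le> j \<and> j < int (degree p)
      then - (coeff p (nat j) / lead_coeff p) * bnum p (int (degree p) - 1) k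
           + bnum p (j - 1) k
      else 0)"

end

theory Submission
  imports Defs
begin

lemma bnum_neg: "bnum p (-1) k = 0" by (cases k) auto

theorem corollary1:
  fixes p :: "complex poly" and k :: nat
  assumes "p \<noteq> 0"
    and "card {x. poly p x = 0} = degree p"
    and "k < degree p"
  shows "(\<Sum>x\<in>{x. poly p x = 0}. x ^ k) = bnum p (int (degree p) - 1) k / lead_coeff p"
proof -
  define n where "n = degree p"
  define S where "S = {x. poly p x = 0}"
  obtain m where nm: "n = Suc m" using assms(3) n_def by (cases n) (auto simp: n_def)
  have an: "lead_coeff p \<noteq> 0" using assms(1) by simp
  have finS: "finite S" using poly_roots_finite assms(1) S_def by auto
  define Bv where "Bv k r = (\<Sum>j<n. bnum p (int j) k * r^j)" for k r
  have base: "Bv 0 r = poly (pderiv p) r" for r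
  proof -
    have "poly (pderiv p) r = (\<Sum>i\<le>m. coeff (pderiv p) i * r ^ i)"
      by (simp add: poly_altdef degree_pderiv n_def[symmetric] nm)
    also have "\<dots> = (\<Sum>i<n. coeff (pderiv p) i * r ^ i)"
      by (simp add: nm lessThan_Suc_atMost)
    also have "\<dots> = Bv 0 r"
      unfolding Bv_def by (intro sum.cong) (auto simp: coeff_pderiv n_def)
    finally show ?thesis by simp
  qed
  have step: "Bv (Suc k) r = r * Bv k r" if r: "poly p r = 0" for k r
  proof -
    let ?b = "bnum p (int m) k"
    have hm: "int n - 1 = int m" using nm by simp
    have "Bv (Suc k) r = (\<Sum>j<n. (-(coeff p j / lead_coeff p) * ?b + bnum p (int j - 1) k) * r^j)"
      unfolding Bv_def by (intro sum.cong) (auto simp: n_def[symmetric] hm)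
    also have "\<dots> = -(?b / lead_coeff p) * (\<Sum>j<n. coeff p j * r^j)
         + (\<Sum>j<n. bnum p (int j - 1) k * r^j)"
      unfolding sum_distrib_left sum.distrib[symmetric] by (intro sum.cong) (auto simp: field_simps)
    also have "(\<Sum>j<n. bnum p (int j - 1) k * r^j) = r * (\<Sum>i<m. bnum p (int i) k * r^i)"
      unfolding nm sum.lessThan_Suc_shift by (simp add: bnum_neg sum_distrib_left algebra_simps)
    also have "(\<Sum>j<n. coeff p j * r^j) = - lead_coeff p * r ^ n"
    proof -
      have "0 = poly p r" using r by simp
      also have "\<dots> = (\<Sum>j<Suc n. coeff p j * r^j)"
        by (simp add: poly_altdef n_def lessThan_Suc_atMost)
      also have "\<dots> = (\<Sum>j<n. coeff p j * r^j) + lead_coeff p * r ^ n"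
        by (simp add: n_def)
      finally show ?thesis by (simp add: eq_neg_iff_add_eq_0)
    qed
    also have "Bv k r = ?b * r^m + (\<Sum>i<m. bnum p (int i) k * r^i)"
      unfolding Bv_def nm by simp
    ultimately show ?thesis using an nm by (simp add: algebra_simps)
  qed
  have BvS: "Bv k r = poly (pderiv p) r * r^k" if "poly p r = 0" for k r
    using that by (induction k) (auto simp: base step)
  define B where "B = (\<Sum>j<n. monom (bnum p (int j) k) j)"
  have polyB: "poly B r = Bv k r" for r
    by (simp add: B_def Bv_def poly_sum poly_monom)
  have coeffB: "coeff B i = (if i < n then bnum p (int i) k else 0)" for i
    by (simp add: B_def coeff_sum coeff_monom)
  have degB: "degree B \<le> m"
    by (rule degree_le) (auto simp: coeffB nm)
  define q where "q r = p div [:-r,1:]" for r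
  have pq: "p = [:-r,1:] * q r" if "r \<in> S" for r
  proof -
    have "[:-r,1:] dvd p" using that unfolding S_def by (simp add: poly_eq_0_iff_dvd)
    then show ?thesis unfolding q_def by (rule dvd_mult_div_cancel[symmetric])
  qed
  have qnz: "q r \<noteq> 0" if "r \<in> S" for r
    using pq[OF that] assms(1) by auto
  have degq: "degree (q r) = m" if "r \<in> S" for r
  proof -
    have "n = degree ([:-r,1:] * q r)" using pq[OF that] n_def by simp
    also have "\<dots> = 1 + degree (q r)"
      by (subst degree_mult_eq) (use qnz[OF that] in auto)
    finally show ?thesis using nm by simp
  qed
  have lq: "coeff (q r) m = lead_coeff p" if "r \<in> S" for r
  proof -
    have "lead_coeff p = lead_coeff ([:-r,1:] * q r)" using pq[OF that] by simp
    also have "\<dots> = lead_coeff [:-r,1:] * lead_coeff (q r)" by (rule lead_coeff_mult)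
    also have "\<dots> = lead_coeff (q r)" by simp
    finally show ?thesis using degq[OF that] by simp
  qed
  have qr: "poly (q r) r = poly (pderiv p) r" if "r \<in> S" for r
  proof -
    have "pderiv p = pderiv ([:-r,1:] * q r)" using pq[OF that] by simp
    also have "\<dots> = [:-r,1:] * pderiv (q r) + q r"
    proof -
      have d1: "pderiv [:-r,1:] = 1" by (simp add: pderiv_pCons one_pCons)
      show ?thesis by (subst pderiv_mult) (simp add: d1)
    qed
    finally show ?thesis by simp
  qed
  have qs: "poly (q r) s = 0" if "r \<in> S" "s \<in> S" "s \<noteq> r" for r s
  proof -
    have "0 = poly p s" using that S_def by simp
    also have "\<dots> = (s - r) * poly (q r) s" by (subst pq[OF that(1)]) (simp add: algebra_simps)
    finally show ?thesis using that(3) by simp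
  qed
  define R where "R = (\<Sum>r\<in>S. smult (r^k) (q r))"
  have degR: "degree R \<le> m"
  proof (rule degree_le, intro allI impI)
    fix i assume "m < i"
    then show "coeff R i = 0"
      unfolding R_def coeff_sum using degq by (auto intro!: sum.neutral coeff_eq_0)
  qed
  have coeffR: "coeff R m = (\<Sum>r\<in>S. r^k) * lead_coeff p"
    unfolding R_def coeff_sum by (simp add: sum_distrib_right lq)
  have polyR: "poly R s = s^k * poly (pderiv p) s" if "s \<in> S" for s
  proof -
    have "poly R s = (\<Sum>r\<in>S. r^k * poly (q r) s)" by (simp add: R_def poly_sum)
    also have "\<dots> = s^k * poly (q s) s + (\<Sum>r\<in>S-{s}. r^k * poly (q r) s)"
      by (rule sum.remove[OF finS that])
    also have "(\<Sum>r\<in>S-{s}. r^k * poly (q r) s) = 0"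
    proof (rule sum.neutral, rule ballI)
      fix r assume "r \<in> S - {s}"
      then show "r^k * poly (q r) s = 0" using qs[of r s] that by auto
    qed
    finally show ?thesis using qr[OF that] by simp
  qed
  have BR: "B = R"
  proof (rule ccontr)
    assume ne: "B \<noteq> R"
    then have dnz: "B - R \<noteq> 0" by simp
    have "S \<subseteq> {x. poly (B - R) x = 0}"
      using polyB polyR BvS S_def by (auto simp: mult.commute)
    then have "card S \<le> card {x. poly (B - R) x = 0}"
      by (rule card_mono[OF poly_roots_finite[OF dnz]])
    also have "\<dots> \<le> degree (B - R)" by (rule card_poly_roots_bound[OF dnz])
    also have "\<dots> \<le> m" using degB degR by (meson degree_diff_le)
    finally show False using assms(2) S_def n_def nm by simp
  qed
  have "bnum p (int m) k = (\<Sum>r\<in>S. r^k) * lead_coeff p"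
    using coeffB[of m] coeffR BR nm by simp
  moreover have "int (degree p) - 1 = int m" using nm n_def by simp
  ultimately show ?thesis using an S_def by simp
qed

end
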